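(* Let $0<\varepsilon<\omega$, let $K\in L^1([-\varepsilon,\varepsilon])$ with $\|K\|_{L^1}=1$ (extended by $0$ outside $[-\varepsilon,\varepsilon]$), let $a\in[0,1]$, and let $\rho=\beta+i\gamma$ with $0\le\beta\le1$, $\gamma\in\mathbb R\setminus\{0\}$. Define $$\Phi_{\omega,\rho,a}=\int_{\omega-\varepsilon}^{\omega+\varepsilon}K(y-\omega)\,y\,e^{(\frac12-a)y}\operatorname{Eit}((a-\rho)y)\,dy,$$ and for integers $j\ge1$ let $F^{(-j)}_{\omega,\rho}(0)=(-1)^j\int_{\omega-\varepsilon}^{\omega+\varepsilon}y^{1-j}K(y-\omega)e^{(\frac12-\rho)y}\,dy$. Then for every integer $k\ge1$, $$\Phi_{\omega,\rho,a}=\sum_{j=1}^k(j-1)!\frac{F^{(-j)}_{\omega,\rho}(0)}{(\rho-a)^j}+\Theta\!\left(\frac{k!\,e^{\varepsilon/2}e^{(\frac12-\beta)\omega}}{(\omega-\varepsilon)^k|\gamma|^{k+1}}\right).$$ Moreover $F^{(-1)}_{\omega,\rho}(0)=-e^{(\frac12-\rho)\omega}\hat K\bigl(\frac\rho i-\frac1{2i}\bigr)$, and if additionally $e\varepsilon<\omega$, then for every integer $j\ge2$ and every integer $m\ge0$, $$F^{(-j)}_{\omega,\rho}(0)=(-1)^je^{(\frac12-\rho)\omega}\sum_{n=0}^m\binom{n+j-2}{n}\frac{(-i)^n\hat K^{(n)}(\frac\rho i-\frac1{2i})}{\omega^{n+j-1}}+\Theta\!\left(\frac{e^{j-2+\v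arepsilon/2}e^{(\frac12-\beta)\omega}}{\omega^{j-1}}\cdot\frac{(e\varepsilon/\omega)^{m+1}}{1-e\varepsilon/\omega}\right).$$
   Context: $\operatorname{Eit}(z)=\int_0^\infty\frac{e^{z-t}}{z-t}\,dt$ for complex $z\notin[0,\infty)$. The Fourier transform is $\hat K(z)=\int_{-\infty}^\infty K(t)e^{-itz}\,dt$, defined for all complex $z$ since $K$ has compact support, and $\hat K^{(n)}$ is its $n$-th derivative. The notation $f=g+\Theta(B)$ means $|f-g|\le B$. *)

theory Defs
  imports "HOL-Analysis.Analysis"
begin

definition Eit :: "complex \<Rightarrow> complex" where
  "Eit z = (LINT t:{0..}|lborel. exp (z - complex_of_real t) / (z - complex_of_real t))"

definition Khat :: "(real \<Rightarrow> complex) \<Rightarrow> complex \<Rightarrow> complex" where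
  "Khat K z = (LINT t|lborel. K t * exp (- \<i> * complex_of_real t * z))"

definition Phi :: "(real \<Rightarrow> complex) \<Rightarrow> real \<Rightarrow> real \<Rightarrow> complex \<Rightarrow> real \<Rightarrow> complex" where
  "Phi K \<epsilon> \<omega> \<rho> a = (LINT y:{\<omega>-\<epsilon>..\<omega>+\<epsilon>}|lborel.
      K (y - \<omega>) * complex_of_real y * exp (complex_of_real ((1/2 - a) * y))
        * Eit ((complex_of_real a - \<rho>) * complex_of_real y))"

definition Fneg :: "(real \<Rightarrow> complex) \<Rightarrow> real \<Rightarrow> real \<Rightarrow> complex \<Rightarrow> nat \<Rightarrow> complex" where
  "Fneg K \<epsilon> \<omega> \<rho> j = (-1) ^ j * (LINT y:{\<omega>-\<epsilon>..\<omega>+\<epsilon>}|lborel.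
      complex_of_real (1 / y ^ (j - 1)) * K (y - \<omega>) * exp ((1/2 - \<rho>) * complex_of_real y))"

end

theory Submission
  imports Defs "HOL-Analysis.Analysis"
begin


lemma exp_minus_int:
  "set_integrable lborel {0<..} (\<lambda>t::real. exp (-t))" "(LINT t:{0<..}|lborel. exp (-t::real)) = 1"
proof -
  have lim: "((\<lambda>t::real. - exp (-t)) \<longlongrightarrow> 0) at_top"
  proof -
    have "((\<lambda>t::real. exp (-t)) \<longlongrightarrow> 0) at_top"
      by (rule exp_at_bot[THEN filterlim_compose]) (simp add: filterlim_uminus_at_bot filterlim_ident)
    then show ?thesis using tendsto_minus by fastforce
  qed
  have A: "(((\<lambda>t. - exp (-t)) \<circ> real_of_ereal) \<longlongrightarrow> -1) (at_right 0)"
    by (auto simp: zero_ereal_def ereal_tendsto_simps intro!: tendsto_eq_intros)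
  have B: "(((\<lambda>t. - exp (-t)) \<circ> real_of_ereal) \<longlongrightarrow> 0) (at_left \<infinity>)"
    using lim by (simp add: ereal_tendsto_simps)
  note F = interval_integral_FTC_nonneg[where F="\<lambda>t. - exp (-t)" and f = "\<lambda>t. exp (-t)" and a=0 and b=\<infinity>, OF _ _ _ _ A B]
  have 1: "set_integrable lborel (einterval 0 \<infinity>) (\<lambda>t::real. exp (-t))"
   and 2: "(LBINT t=0..\<infinity>. exp (-t)) = 0 - (-1)"
    by (rule F; auto intro!: derivative_eq_intros)+
  show "set_integrable lborel {0<..} (\<lambda>t::real. exp (-t))" using 1 by (simp add: zero_ereal_def)
  show "(LINT t:{0<..}|lborel. exp (-t::real)) = 1" using 2 unfolding zero_ereal_def interval_integral_to_infinity_eq by simp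
qed




lemma quot_deriv:
  fixes z w :: complex and k :: nat
  assumes "z - w \<noteq> 0"
  shows "((\<lambda>w. exp (z - w) / (z - w)^(Suc k)) has_field_derivative
      (of_nat (Suc k) * (exp (z - w) / (z - w)^(Suc k + 1)) - exp (z - w) / (z - w)^(Suc k))) (at w)"
proof -
  define u where "u = z - w"
  have u: "u \<noteq> 0" using assms u_def by simp
  have "((\<lambda>w. exp (z - w) / (z - w)^(Suc k)) has_field_derivative
      ((- exp (z - w)) * (z - w)^(Suc k) - exp (z - w) * (of_nat (Suc k) * (z - w)^k * (-1)))
        / ((z - w)^(Suc k) * (z - w)^(Suc k))) (at w)"
    using assms by (intro DERIV_divide derivative_eq_intros) (auto simp: )
  moreover have "((- exp (z - w)) * (z - w)^(Suc k) - exp (z - w) * (of_nat (Suc k) * (z - w)^k * (-1)))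
        / ((z - w)^(Suc k) * (z - w)^(Suc k)) = 
      (of_nat (Suc k) * (exp (z - w) / (z - w)^(Suc k + 1)) - exp (z - w) / (z - w)^(Suc k))"
    unfolding u_def[symmetric] using u by (simp add: power_Suc field_simps)
  ultimately show ?thesis by simp
qed

lemma H_deriv:
  fixes z w :: complex and k :: nat
  assumes "z - w \<noteq> 0"
  shows "((\<lambda>w. exp (z - w) * (\<Sum>j=1..k. fact (j-1) / (z - w)^j)) has_field_derivative
          (fact k * (exp (z - w) / (z - w)^(k+1)) - exp (z - w) / (z - w))) (at w)"
  using assms
proof (induction k)
  case 0
  then show ?case by (simp add: field_simps)
next
  case (Suc k)
  have e: "(\<lambda>w. exp (z - w) * (\<Sum>j=1..Suc k. fact (j-1) / (z - w)^j))
     = (\<lambda>w. exp (z - w) * (\<Sum>j=1..k. fact (j-1) / (z - w)^j) + fact k * (exp (z - w) / (z - w)^(Suc k)))"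
    by (rule ext) (simp add: distrib_left)
  have d2: "((\<lambda>w. fact k * (exp (z - w) / (z - w)^(Suc k))) has_field_derivative
      (fact (Suc k) * (exp (z - w) / (z - w)^(Suc k + 1)) - fact k * (exp (z - w) / (z - w)^(Suc k)))) (at w)"
    using DERIV_cmult[OF quot_deriv[OF Suc.prems, of k], of "fact k"]
    by (simp add: algebra_simps)
  show ?case unfolding e
    using DERIV_add[OF Suc.IH[OF Suc.prems] d2] by (simp add: algebra_simps)
qed




lemma f_bound:
  fixes z :: complex and t :: real and p :: nat
  assumes "Im z \<noteq> 0"
  shows "norm (exp (z - of_real t) / (z - of_real t)^p) \<le> exp (Re z) / \<bar>Im z\<bar>^p * exp (-t)"
proof -
  have "\<bar>Im z\<bar> \<le> norm (z - of_real t)" using abs_Im_le_cmod[of "z - of_real t"] by simp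
  then have "\<bar>Im z\<bar>^p \<le> norm (z - of_real t)^p" by (intro power_mono) auto
  moreover have "\<bar>Im z\<bar>^p > 0" using assms by simp
  ultimately have "norm (exp (z - of_real t) / (z - of_real t)^p) \<le> exp (Re z - t) / \<bar>Im z\<bar>^p"
    by (simp add: norm_divide norm_power) (rule divide_left_mono, auto intro!: mult_pos_pos less_le_trans[OF _ \<open>\<bar>Im z\<bar>^p \<le> _\<close>])
  moreover have "exp (Re z - t) / \<bar>Im z\<bar>^p = exp (Re z) / \<bar>Im z\<bar>^p * exp (-t)"
    by (simp add: exp_diff exp_minus field_simps)
  ultimately show ?thesis by simp
qed

lemma f_int:
  fixes z :: complex and p :: nat
  assumes "Im z \<noteq> 0"
  shows "set_integrable lborel {0<..} (\<lambda>t. exp (z - of_real t) / (z - of_real t)^p)"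
proof -
  have "set_integrable lborel {0<..} (\<lambda>t. exp (Re z) / \<bar>Im z\<bar>^p * exp (-t))"
    using exp_minus_int(1) by (intro set_integrable_mult_right) auto
  then show ?thesis
    unfolding set_integrable_def
    apply (rule Bochner_Integration.integrable_bound)
     apply measurable
    apply (intro AE_I2)
    using f_bound[OF assms] by (auto simp: indicator_def)
qed

lemma f_int_bound:
  fixes z :: complex and p :: nat
  assumes "Im z \<noteq> 0"
  shows "norm (LINT t:{0<..}|lborel. exp (z - of_real t) / (z - of_real t)^p) \<le> exp (Re z) / \<bar>Im z\<bar>^p"
proof -
  have "norm (LINT t:{0<..}|lborel. exp (z - of_real t) / (z - of_real t)^p)
      \<le> (LINT t:{0<..}|lborel. norm (exp (z - of_real t) / (z - of_real t)^p))"
    by (rule set_integral_norm_bound[OF f_int[OF assms]])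
  also have "\<dots> \<le> (LINT t:{0<..}|lborel. exp (Re z) / \<bar>Im z\<bar>^p * exp (-t))"
    apply (rule set_integral_mono)
    using f_int[OF assms] exp_minus_int(1) f_bound[OF assms]
    by (auto simp: set_integrable_norm)
  also have "\<dots> = exp (Re z) / \<bar>Im z\<bar>^p" using exp_minus_int(2) by simp
  finally show ?thesis .
qed




lemma Eit_expansion:
  fixes z :: complex and k :: nat
  assumes z: "Im z \<noteq> 0"
  shows "Eit z = (\<Sum>j=1..k. fact (j-1) * exp z / z^j)
           + fact k * (LINT t:{0<..}|lborel. exp (z - of_real t) / (z - of_real t)^(k+1))"
proof -
  define f where "f p t = exp (z - of_real t) / (z - of_real t)^p" for p t
  define H where "H w = exp (z - w) * (\<Sum>j=1..k. fact (j-1) / (z - w)^j)" for w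
  define H' where "H' t = fact k * f (k+1) t - f 1 t" for t
  have ne: "z - of_real t \<noteq> 0" for t using z by (auto simp: complex_eq_iff)
  have fi: "set_integrable lborel {0<..} (f p)" for p unfolding f_def using f_int[OF z] .
  have E1: "Eit z = (LINT t:{0<..}|lborel. f 1 t)"
  proof -
    have "Eit z = (LINT t:{0..}|lborel. f 1 t)" unfolding Eit_def f_def by simp
    also have "\<dots> = (LINT t:{0<..}|lborel. f 1 t)"
      apply (rule set_integral_cong_set)
      using fi[of 1] unfolding set_integrable_def set_borel_measurable_def
        apply (simp_all add: f_def)
        apply measurable
      using AE_lborel_singleton[of "0::real"] by eventually_elim auto
    finally show ?thesis .
  qed
  have Hd: "((\<lambda>t. H (of_real t)) has_vector_derivative H' t) (at t)" for t
    unfolding H_def H'_def f_def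
    by (rule has_vector_derivative_real_field) (use H_deriv[OF ne[of t]] in simp)
  have H'c: "isCont H' t" for t
    unfolding H'_def f_def using ne[of t] by (intro continuous_intros) auto
  have H'i: "set_integrable lborel (einterval 0 \<infinity>) H'"
    unfolding H'_def using fi by (simp add: zero_ereal_def)
  have Hc: "isCont (\<lambda>t. H (of_real t)) t" for t
    unfolding H_def using ne[of t] by (intro continuous_intros) auto
  have A: "(((\<lambda>t. H (of_real t)) \<circ> real_of_ereal) \<longlongrightarrow> H 0) (at_right 0)"
    unfolding zero_ereal_def ereal_tendsto_simps
    using Hc[of 0] unfolding isCont_def by (auto intro: tendsto_mono[OF at_le])
  have B: "(((\<lambda>t. H (of_real t)) \<circ> real_of_ereal) \<longlongrightarrow> 0) (at_left \<infinity>)"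
    unfolding ereal_tendsto_simps
  proof (rule Lim_null_comparison)
    define C where "C = (\<Sum>j=1..k. fact (j-1) / \<bar>Im z\<bar>^j)"
    show "\<forall>\<^sub>F t in at_top. norm (H (of_real t)) \<le> exp (Re z) * C * exp (-t)"
    proof (intro always_eventually allI)
      fix t :: real
      have "norm (H (of_real t)) \<le> exp (Re z - t) * (\<Sum>j=1..k. norm (fact (j-1) / (z - of_real t)^j))"
        unfolding H_def norm_mult by (intro mult_mono norm_sum) auto
      also have "\<dots> \<le> exp (Re z - t) * C"
        unfolding C_def
      proof (intro mult_left_mono sum_mono)
        fix j :: nat
        have "\<bar>Im z\<bar> \<le> norm (z - of_real t)" using abs_Im_le_cmod[of "z - of_real t"] by simp
        then have "\<bar>Im z\<bar>^j \<le> norm (z - of_real t)^j" by (intro power_mono) auto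
        moreover have "\<bar>Im z\<bar>^j > 0" using z by simp
        ultimately show "norm (fact (j-1) / (z - of_real t)^j :: complex) \<le> fact (j-1) / \<bar>Im z\<bar>^j"
          by (simp add: norm_divide norm_power norm_fact) (rule divide_left_mono, auto intro!: mult_pos_pos less_le_trans[OF _ \<open>\<bar>Im z\<bar>^j \<le> _\<close>])
      qed auto
      finally show "norm (H (of_real t)) \<le> exp (Re z) * C * exp (-t)" by (simp add: exp_diff exp_minus field_simps)
    qed
    have "((\<lambda>t::real. exp (-t)) \<longlongrightarrow> 0) at_top"
      by (rule exp_at_bot[THEN filterlim_compose]) (simp add: filterlim_uminus_at_bot filterlim_ident)
    then show "((\<lambda>t. exp (Re z) * C * exp (-t)) \<longlongrightarrow> 0) at_top"
      using tendsto_mult_right_zero by blast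
  qed
  have FTC: "(LBINT t=0..\<infinity>. H' t) = 0 - H 0"
    by (rule interval_integral_FTC_integrable[OF _ _ _ H'i A B]) (auto intro: Hd H'c)
  then have FTC': "(LINT t:{0<..}|lborel. H' t) = - H 0"
    by (simp add: interval_lebesgue_integral_0_infty)
  have "(LINT t:{0<..}|lborel. f 1 t) = (LINT t:{0<..}|lborel. fact k * f (k+1) t - H' t)"
    unfolding H'_def by simp
  also have "\<dots> = fact k * (LINT t:{0<..}|lborel. f (k+1) t) + H 0"
    using fi FTC' unfolding H'_def by (simp add: set_integral_diff algebra_simps)
  finally have "Eit z = fact k * (LINT t:{0<..}|lborel. f (k+1) t) + H 0" using E1 by simp
  moreover have "H 0 = (\<Sum>j=1..k. fact (j-1) * exp z / z^j)"
    unfolding H_def by (simp add: sum_distrib_left field_simps)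
  ultimately show ?thesis unfolding f_def by simp
qed

lemma Eit_bound:
  fixes z :: complex and k :: nat
  assumes z: "Im z \<noteq> 0"
  shows "norm (Eit z - (\<Sum>j=1..k. fact (j-1) * exp z / z^j)) \<le> fact k * exp (Re z) / \<bar>Im z\<bar>^(k+1)"
proof -
  have "norm (Eit z - (\<Sum>j=1..k. fact (j-1) * exp z / z^j))
     = fact k * norm (LINT t:{0<..}|lborel. exp (z - of_real t) / (z - of_real t)^(k+1))"
    unfolding Eit_expansion[OF z, of k] by (simp add: norm_mult norm_fact)
  also have "\<dots> \<le> fact k * (exp (Re z) / \<bar>Im z\<bar>^(k+1))"
    by (rule mult_left_mono[OF f_int_bound[OF z]]) auto
  finally show ?thesis by simp
qed




lemma binom_series:
  fixes x :: real and k :: nat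
  assumes "k \<ge> 1" "\<bar>x\<bar> < 1"
  shows "(\<lambda>n. real ((n+k-1) choose n) * (-x)^n) sums (1 / (1+x)^k)"
proof -
  have "(\<lambda>n. ((- real k) gchoose n) * x^n) sums (1 + x) powr (- real k)"
    by (rule gen_binomial_real) (use assms in auto)
  moreover have "((- real k) gchoose n) * x^n = real ((n+k-1) choose n) * (-x)^n" for n
  proof -
    have "((- real k) gchoose n) = (-1)^n * ((real k + real n - 1) gchoose n)"
      by (rule gbinomial_minus)
    also have "real k + real n - 1 = real (n+k-1)" using assms by simp
    also have "(real (n+k-1) gchoose n) = real ((n+k-1) choose n)"
      by (simp add: binomial_gbinomial)
    finally show ?thesis by (simp add: power_minus')
  qed
  moreover have "(1 + x) powr (- real k) = 1 / (1+x)^k"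
    using assms by (simp add: powr_minus powr_realpow divide_inverse)
  ultimately show ?thesis by simp
qed

lemma binom_le_exp: "real ((n+k) choose n) \<le> exp 1 ^ (n+k)"
proof -
  have "real ((n+k) choose n) \<le> 2^(n+k)"
    using binomial_le_pow2[of "n+k" n] by (metis of_nat_le_iff of_nat_numeral of_nat_power)
  also have "(2::real)^(n+k) \<le> exp 1 ^ (n+k)"
    by (rule power_mono) (use exp_ge_add_one_self[of 1] in auto)
  finally show ?thesis .
qed

lemma binom_rem:
  fixes x r :: real and k m :: nat
  assumes k: "k \<ge> 1" and x: "\<bar>x\<bar> \<le> r" and r: "exp 1 * r < 1"
  shows "\<bar>1 / (1+x)^k - (\<Sum>n=0..m. real ((n+k-1) choose n) * (-x)^n)\<bar>
          \<le> exp 1 ^ (k-1) * ((exp 1 * r)^(m+1) / (1 - exp 1 * r))"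
proof -
  define s where "s n = real ((n+k-1) choose n) * (-x)^n" for n
  have r0: "0 \<le> r" using x by linarith
  have e1: "1 \<le> exp (1::real)" by simp
  have "r \<le> exp 1 * r" using mult_right_mono[OF e1 r0] by simp
  then have "r < 1" using r by linarith
  then have ss: "s sums (1/(1+x)^k)" unfolding s_def using binom_series[OF k, of x] x by simp
  have tail: "(\<lambda>n. s (n + (m+1))) sums (1/(1+x)^k - (\<Sum>n<m+1. s n))"
    by (rule sums_split_initial_segment[OF ss])
  have sb: "\<bar>s (n + (m+1))\<bar> \<le> exp 1 ^ (k-1) * (exp 1 * r)^(m+1) * (exp 1 * r)^n" for n
  proof -
    have "\<bar>s (n + (m+1))\<bar> = real ((n+(m+1)+(k-1)) choose (n+(m+1))) * \<bar>x\<bar>^(n+(m+1))"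
      unfolding s_def using k by (simp add: abs_mult power_abs)
    also have "\<dots> \<le> exp 1 ^ (n+(m+1)+(k-1)) * r^(n+(m+1))"
      by (intro mult_mono binom_le_exp power_mono) (use x in auto)
    also have "\<dots> = exp 1 ^ (k-1) * (exp 1 * r)^(m+1) * (exp 1 * r)^n"
      by (simp add: power_add power_mult_distrib)
    finally show ?thesis .
  qed
  have er0: "0 \<le> exp 1 * r" using r0 by simp
  have geo: "(\<lambda>n. exp 1 ^ (k-1) * (exp 1 * r)^(m+1) * (exp 1 * r)^n) sums
        (exp 1 ^ (k-1) * (exp 1 * r)^(m+1) * (1 / (1 - exp 1 * r)))"
    by (intro sums_mult geometric_sums) (use er0 r in auto)
  have "\<bar>1/(1+x)^k - (\<Sum>n<m+1. s n)\<bar> = \<bar>\<Sum>n. s (n + (m+1))\<bar>"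
    using sums_unique[OF tail] by simp
  also have "\<dots> \<le> (\<Sum>n. \<bar>s (n + (m+1))\<bar>)"
    by (rule summable_rabs, rule summable_rabs_comparison_test[OF _ sums_summable[OF geo]])
       (use sb in auto)
  also have "\<dots> \<le> (\<Sum>n. exp 1 ^ (k-1) * (exp 1 * r)^(m+1) * (exp 1 * r)^n)"
    by (rule suminf_le[OF sb _ sums_summable[OF geo]],
        rule summable_rabs_comparison_test[OF _ sums_summable[OF geo]]) (use sb in auto)
  also have "\<dots> = exp 1 ^ (k-1) * (exp 1 * r)^(m+1) * (1 / (1 - exp 1 * r))"
    using sums_unique[OF geo] by simp
  finally show ?thesis
    unfolding s_def by (simp add: atLeast0AtMost lessThan_Suc_atMost)
qed




locale Kctx =
  fixes K :: "real \<Rightarrow> complex" and \<epsilon> :: real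
  assumes eps0: "0 < \<epsilon>"
    and K_int: "set_integrable lborel {-\<epsilon>..\<epsilon>} K"
    and K_norm: "(LINT t:{-\<epsilon>..\<epsilon>}|lborel. norm (K t)) = 1"
    and K_supp: "\<And>t. t \<notin> {-\<epsilon>..\<epsilon>} \<Longrightarrow> K t = 0"
begin

lemma ind_K: "indicator {-\<epsilon>..\<epsilon>} t *\<^sub>R K t = K t"
  using K_supp[of t] by (cases "t \<in> {-\<epsilon>..\<epsilon>}") auto

lemma Kint: "integrable lborel K"
  using K_int unfolding set_integrable_def ind_K .

lemma Kmeas[measurable]: "K \<in> borel_measurable lborel"
  using Kint by (rule borel_measurable_integrable)

lemma Knorm1: "(\<integral>t. norm (K t) \<partial>lborel) = 1"
proof -
  have "indicator {-\<epsilon>..\<epsilon>} t *\<^sub>R norm (K t) = norm (K t)" for t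
    using K_supp[of t] by (cases "t \<in> {-\<epsilon>..\<epsilon>}") auto
  then show ?thesis using K_norm unfolding set_lebesgue_integral_def by presburger
qed

lemma intK:
  fixes g :: "real \<Rightarrow> complex"
  assumes gm: "g \<in> borel_measurable lborel" and gb: "\<And>t. t \<in> {-\<epsilon>..\<epsilon>} \<Longrightarrow> norm (g t) \<le> M"
  shows "integrable lborel (\<lambda>t. K t * g t)" "norm (\<integral>t. K t * g t \<partial>lborel) \<le> M"
proof -
  have M0: "0 \<le> M" using gb[of 0] eps0 by (smt (verit) atLeastAtMost_iff norm_ge_zero)
  have pb: "norm (K t * g t) \<le> M * norm (K t)" for t
  proof (cases "t \<in> {-\<epsilon>..\<epsilon>}")
    case True then show ?thesis using gb[of t] by (simp add: norm_mult mult.commute[of M] mult_left_mono)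
  next
    case False then show ?thesis using K_supp[of t] by simp
  qed
  show i: "integrable lborel (\<lambda>t. K t * g t)"
    apply (rule Bochner_Integration.integrable_bound[where f="\<lambda>t. of_real M * K t"])
    using Kint apply simp
     apply measurable
    using gm apply simp
    using pb M0 by (simp add: norm_mult)
  have "norm (\<integral>t. K t * g t \<partial>lborel) \<le> (\<integral>t. M * norm (K t) \<partial>lborel)"
    by (rule Bochner_Integration.integral_norm_bound_integral[OF i]) (use Kint pb in auto)
  also have "\<dots> = M" using Knorm1 by simp
  finally show "norm (\<integral>t. K t * g t \<partial>lborel) \<le> M" .
qed

lemma transK:
  fixes g :: "real \<Rightarrow> complex"
  shows "(LINT y:{\<omega>-\<epsilon>..\<omega>+\<epsilon>}|lborel. K (y - \<omega>) * g y) = (\<integral>t. K t * g (t + \<omega>) \<partial>lborel)"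
proof -
  have "(LINT y:{\<omega>-\<epsilon>..\<omega>+\<epsilon>}|lborel. K (y - \<omega>) * g y)
      = (\<integral>y. indicator {\<omega>-\<epsilon>..\<omega>+\<epsilon>} y *\<^sub>R (K (y - \<omega>) * g y) \<partial>lborel)"
    by (simp add: set_lebesgue_integral_def)
  also have "\<dots> = \<bar>1\<bar> *\<^sub>R (\<integral>x. indicator {\<omega>-\<epsilon>..\<omega>+\<epsilon>} (\<omega> + 1 * x) *\<^sub>R (K ((\<omega> + 1 * x) - \<omega>) * g (\<omega> + 1 * x)) \<partial>lborel)"
    by (rule lborel_integral_real_affine) simp
  also have "\<dots> = (\<integral>t. K t * g (t + \<omega>) \<partial>lborel)"
  proof -
    have "indicator {\<omega>-\<epsilon>..\<omega>+\<epsilon>} (\<omega> + x) *\<^sub>R (K x * g (\<omega> + x)) = K x * g (x + \<omega>)" for x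
      using K_supp[of x] by (cases "x \<in> {-\<epsilon>..\<epsilon>}") (auto simp: indicator_def add.commute)
    then show ?thesis by simp
  qed
  finally show ?thesis .
qed

end



lemma alg1:
  fixes y :: real and a :: real and \<rho> :: complex and j :: nat
  assumes y: "y > 0" and j: "j \<ge> 1" and c: "complex_of_real a - \<rho> \<noteq> 0"
  shows "complex_of_real y * exp (complex_of_real ((1/2 - a) * y)) *
           (fact (j-1) * exp ((complex_of_real a - \<rho>) * complex_of_real y) / ((complex_of_real a - \<rho>) * complex_of_real y)^j)
       = fact (j-1) * ((-1)^j * (complex_of_real (1 / y^(j-1)) * exp ((1/2 - \<rho>) * complex_of_real y))) / (\<rho> - complex_of_real a)^j"
proof -
  define c where "c = complex_of_real a - \<rho>"
  have e: "exp (complex_of_real ((1/2 - a) * y)) * exp (c * complex_of_real y) = exp ((1/2 - \<rho>) * complex_of_real y)"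
    unfolding c_def exp_add[symmetric] by (simp add: algebra_simps)
  have p: "(\<rho> - complex_of_real a)^j = (-1)^j * c^j" unfolding c_def
    by (metis minus_diff_eq mult_minus1 power_mult_distrib)
  obtain i where i: "j = Suc i" using j by (cases j) auto
  have y0: "complex_of_real y \<noteq> 0" using y by simp
  have c0: "c \<noteq> 0" using c c_def by simp
  show ?thesis
    unfolding c_def[symmetric] p using e[symmetric] y0 c0 unfolding i
    by (simp add: field_simps power_mult_distrib)
qed



lemma exp_quad:
  fixes u :: complex
  assumes "norm u \<le> 1"
  shows "norm (exp u - 1 - u) \<le> norm u ^ 2"
proof -
  have e: "exp u - 1 - u = (\<Sum>n. inverse (fact (n + 2)) *\<^sub>R (u ^ (n + 2)))"
    using exp_first_two_terms[of u] by simp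
  have nn: "norm (inverse (fact (n + 2)) *\<^sub>R (u ^ (n + 2))) = inverse (fact (n + 2)) * norm u ^ (n + 2)" for n
    by (simp add: norm_power norm_mult del: power_Suc)
  have s: "summable (\<lambda>n. inverse (fact (n + 2)) * norm u ^ (n + 2))"
    by (rule summable_exp[THEN summable_ignore_initial_segment])
  have "norm (exp u - 1 - u) \<le> (\<Sum>n. inverse (fact (n + 2)) * norm u ^ (n + 2))"
    unfolding e using summable_norm[of "\<lambda>n. inverse (fact (n + 2)) *\<^sub>R (u ^ (n + 2))"] s
    by (simp only: nn)
  also have "\<dots> = exp (norm u) - 1 - norm u"
    using exp_first_two_terms[of "norm u"] by simp
  also have "\<dots> \<le> norm u ^ 2" using exp_bound[of "norm u"] assms by simp
  finally show ?thesis .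
qed

definition Gf :: "(real \<Rightarrow> complex) \<Rightarrow> nat \<Rightarrow> complex \<Rightarrow> complex" where
  "Gf K n w = (\<integral>t. K t * ((- \<i> * complex_of_real t)^n * exp (- \<i> * complex_of_real t * w)) \<partial>lborel)"

context Kctx begin

lemma intK_cont:
  fixes g :: "real \<Rightarrow> complex"
  assumes gm: "g \<in> borel_measurable lborel" and gc: "continuous_on {-\<epsilon>..\<epsilon>} g"
  shows "integrable lborel (\<lambda>t. K t * g t)"
proof -
  obtain M where "\<forall>x\<in>g ` {-\<epsilon>..\<epsilon>}. norm x \<le> M"
    using compact_imp_bounded[OF compact_continuous_image[OF gc compact_Icc]] unfolding bounded_iff by blast
  then show ?thesis using intK(1)[OF gm, of M] by auto
qed

lemma Gint: "integrable lborel (\<lambda>t. K t * ((- \<i> * complex_of_real t)^n * exp (- \<i> * complex_of_real t * w)))"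
  by (rule intK_cont) (measurable, intro continuous_intros)

lemma Gderiv: "(Gf K n has_field_derivative Gf K (Suc n) w) (at w)"
  unfolding DERIV_def
proof -
  define C where "C = \<epsilon>^(n+2) * exp (\<epsilon> * \<bar>Im w\<bar>)"
  define Q where "Q h = (Gf K n (w + h) - Gf K n w) / h - Gf K (Suc n) w" for h
  have key: "norm (Q h) \<le> C * norm h" if h0: "h \<noteq> 0" and hs: "norm h < 1 / \<epsilon>" for h
  proof -
    define g where "g t = (- \<i> * complex_of_real t)^n * exp (- \<i> * complex_of_real t * w)
        * (exp (- \<i> * complex_of_real t * h) - 1 - (- \<i> * complex_of_real t * h))" for t
    have "Gf K n (w + h) - Gf K n w - h * Gf K (Suc n) w = (\<integral>t. K t * g t \<partial>lborel)"
    proof -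
      have "Gf K n (w + h) - Gf K n w - h * Gf K (Suc n) w
        = (\<integral>t. K t * ((- \<i> * complex_of_real t)^n * exp (- \<i> * complex_of_real t * (w + h)))
             - K t * ((- \<i> * complex_of_real t)^n * exp (- \<i> * complex_of_real t * w))
             - h * (K t * ((- \<i> * complex_of_real t)^(Suc n) * exp (- \<i> * complex_of_real t * w))) \<partial>lborel)"
      proof -
        let ?a = "\<lambda>t. K t * ((- \<i> * complex_of_real t)^n * exp (- \<i> * complex_of_real t * (w + h)))"
        let ?b = "\<lambda>t. K t * ((- \<i> * complex_of_real t)^n * exp (- \<i> * complex_of_real t * w))"
        let ?c = "\<lambda>t. h * (K t * ((- \<i> * complex_of_real t)^(Suc n) * exp (- \<i> * complex_of_real t * w)))"
        have ia: "integrable lborel ?a" by (rule Gint)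
        have ib: "integrable lborel ?b" by (rule Gint)
        have ic: "integrable lborel ?c" by (rule Bochner_Integration.integrable_mult_right, rule Gint)
        have "(\<integral>t. ?a t - ?b t - ?c t \<partial>lborel) = (\<integral>t. ?a t - ?b t \<partial>lborel) - integral\<^sup>L lborel ?c"
          by (rule Bochner_Integration.integral_diff[OF Bochner_Integration.integrable_diff[OF ia ib] ic])
        also have "(\<integral>t. ?a t - ?b t \<partial>lborel) = integral\<^sup>L lborel ?a - integral\<^sup>L lborel ?b"
          by (rule Bochner_Integration.integral_diff[OF ia ib])
        also have "integral\<^sup>L lborel ?c = h * Gf K (Suc n) w"
          unfolding Gf_def by (rule integral_mult_right_zero)
        finally show ?thesis unfolding Gf_def by simp
      qed
      also have "\<dots> = (\<integral>t. K t * g t \<partial>lborel)"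
        unfolding g_def
      proof (intro Bochner_Integration.integral_cong refl)
        fix t :: real
        have ee: "exp (- \<i> * complex_of_real t * (w + h)) = exp (- \<i> * complex_of_real t * w) * exp (- \<i> * complex_of_real t * h)"
          by (simp add: exp_add[symmetric] algebra_simps)
        show "K t * ((- \<i> * complex_of_real t)^n * exp (- \<i> * complex_of_real t * (w + h)))
             - K t * ((- \<i> * complex_of_real t)^n * exp (- \<i> * complex_of_real t * w))
             - h * (K t * ((- \<i> * complex_of_real t)^(Suc n) * exp (- \<i> * complex_of_real t * w)))
           = K t * ((- \<i> * complex_of_real t)^n * exp (- \<i> * complex_of_real t * w)
        * (exp (- \<i> * complex_of_real t * h) - 1 - (- \<i> * complex_of_real t * h)))"
          unfolding ee by (simp add: algebra_simps)
      qed
      finally show ?thesis .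
    qed
    moreover have "norm (\<integral>t. K t * g t \<partial>lborel) \<le> \<epsilon>^n * exp (\<epsilon> * \<bar>Im w\<bar>) * (\<epsilon> * norm h)^2"
    proof (rule intK(2))
      show "g \<in> borel_measurable lborel" unfolding g_def by measurable
      fix t :: real assume t: "t \<in> {-\<epsilon>..\<epsilon>}"
      then have at: "\<bar>t\<bar> \<le> \<epsilon>" by auto
      have n1: "norm ((- \<i> * complex_of_real t)^n) \<le> \<epsilon>^n"
        using at by (simp add: norm_power norm_mult power_mono)
      have n2: "norm (exp (- \<i> * complex_of_real t * w)) \<le> exp (\<epsilon> * \<bar>Im w\<bar>)"
      proof -
        have "t * Im w \<le> \<epsilon> * \<bar>Im w\<bar>"
          using mult_mono[OF at order_refl[of "\<bar>Im w\<bar>"]] abs_ge_self[of "t * Im w"]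
          using eps0 by (simp add: abs_mult)
        then show ?thesis by simp
      qed
      have nu: "norm (- \<i> * complex_of_real t * h) = \<bar>t\<bar> * norm h" by (simp add: norm_mult)
      have hb: "\<epsilon> * norm h \<le> 1" using hs eps0 by (simp add: field_simps)
      have tu: "\<bar>t\<bar> * norm h \<le> \<epsilon> * norm h" using at by (simp add: mult_right_mono)
      have n3: "norm (exp (- \<i> * complex_of_real t * h) - 1 - (- \<i> * complex_of_real t * h)) \<le> (\<epsilon> * norm h)^2"
        using exp_quad[of "- \<i> * complex_of_real t * h"] nu tu hb
        by (smt (verit) mult_nonneg_nonneg norm_ge_zero abs_ge_zero power_mono)
      show "norm (g t) \<le> \<epsilon>^n * exp (\<epsilon> * \<bar>Im w\<bar>) * (\<epsilon> * norm h)^2"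
        unfolding g_def norm_mult
        using eps0 by (intro mult_mono n1 n2 n3) auto
    qed
    ultimately have "norm (Gf K n (w + h) - Gf K n w - h * Gf K (Suc n) w) \<le> \<epsilon>^n * exp (\<epsilon> * \<bar>Im w\<bar>) * (\<epsilon> * norm h)^2"
      by simp
    moreover have "Q h = (Gf K n (w + h) - Gf K n w - h * Gf K (Suc n) w) / h"
      unfolding Q_def using h0 by (simp add: field_simps)
    ultimately have "norm (Q h) \<le> \<epsilon>^n * exp (\<epsilon> * \<bar>Im w\<bar>) * (\<epsilon> * norm h)^2 / norm h"
      using h0 by (simp add: norm_divide divide_right_mono)
    also have "\<dots> = C * norm h" unfolding C_def using h0 by (simp add: power2_eq_square field_simps)
    finally show ?thesis .
  qed
  have "(Q \<longlongrightarrow> 0) (at 0)"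
  proof (rule Lim_null_comparison)
    show "\<forall>\<^sub>F h in at 0. norm (Q h) \<le> C * norm h"
      unfolding eventually_at using eps0 key by (intro exI[of _ "1/\<epsilon>"]) auto
    show "((\<lambda>h. C * norm h) \<longlongrightarrow> 0) (at (0::complex))"
      by (intro tendsto_mult_right_zero tendsto_norm_zero tendsto_ident_at)
  qed
  then have "((\<lambda>h. Q h + Gf K (Suc n) w) \<longlongrightarrow> 0 + Gf K (Suc n) w) (at 0)"
    by (intro tendsto_add tendsto_const)
  then show "((\<lambda>h. (Gf K n (w + h) - Gf K n w) / h) \<longlongrightarrow> Gf K (Suc n) w) (at 0)"
    unfolding Q_def by simp
qed

lemma deriv_Khat: "(deriv ^^ n) (Khat K) = Gf K n"
proof (induction n)
  case 0
  then show ?case unfolding Khat_def Gf_def by (simp add: fun_eq_iff)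
next
  case (Suc n)
  have "(deriv ^^ Suc n) (Khat K) = deriv (Gf K n)" using Suc.IH by simp
  then show ?case using DERIV_imp_deriv[OF Gderiv] by (simp add: fun_eq_iff)
qed

end




context Kctx begin

lemma Phi_part:
  fixes \<omega> a \<beta> \<gamma> :: real and k :: nat
  assumes om: "\<epsilon> < \<omega>" and \<beta>: "0 \<le> \<beta>" "\<beta> \<le> 1" and \<gamma>: "\<gamma> \<noteq> 0" and k: "k \<ge> 1"
  shows "cmod (Phi K \<epsilon> \<omega> (Complex \<beta> \<gamma>) a
                 - (\<Sum>j=1..k. of_nat (fact (j - 1)) * Fneg K \<epsilon> \<omega> (Complex \<beta> \<gamma>) j
                               / (Complex \<beta> \<gamma> - complex_of_real a) ^ j))
           \<le> fact k * exp (\<epsilon> / 2) * exp ((1/2 - \<beta>) * \<omega>)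
               / ((\<omega> - \<epsilon>) ^ k * \<bar>\<gamma>\<bar> ^ (k + 1))"
proof -
  define \<rho> where "\<rho> = Complex \<beta> \<gamma>"
  define c where "c = complex_of_real a - \<rho>"
  have c0: "c \<noteq> 0" and Imc: "Im c = - \<gamma>" and Rec: "Re c = a - \<beta>"
    using \<gamma> unfolding c_def \<rho>_def by (auto simp: complex_eq_iff)
  define P where "P y = complex_of_real y * exp (complex_of_real ((1/2 - a) * y)) * Eit (c * complex_of_real y)" for y
  define Q where "Q j y = complex_of_real (1 / y^(j-1)) * exp ((1/2 - \<rho>) * complex_of_real y)" for j y
  define S where "S y = (\<Sum>j=1..k. fact (j-1) * ((-1)^j * Q j y) / (\<rho> - complex_of_real a)^j)" for y
  define D where "D y = P y - S y" for y
  define B where "B = fact k * exp (\<epsilon> / 2) * exp ((1/2 - \<beta>) * \<omega>) / ((\<omega> - \<epsilon>) ^ k * \<bar>\<gamma>\<bar> ^ (k + 1))"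
  have Phi_eq: "Phi K \<epsilon> \<omega> \<rho> a = (\<integral>t. K t * P (t + \<omega>) \<partial>lborel)"
  proof -
    have "Phi K \<epsilon> \<omega> \<rho> a = (LINT y:{\<omega>-\<epsilon>..\<omega>+\<epsilon>}|lborel. K (y - \<omega>) * P y)"
      unfolding Phi_def P_def c_def by (simp add: mult.assoc)
    also have "\<dots> = (\<integral>t. K t * P (t + \<omega>) \<partial>lborel)" by (rule transK)
    finally show ?thesis .
  qed
  have Fneg_eq: "Fneg K \<epsilon> \<omega> \<rho> j = (-1)^j * (\<integral>t. K t * Q j (t + \<omega>) \<partial>lborel)" for j
  proof -
    have "Fneg K \<epsilon> \<omega> \<rho> j = (-1)^j * (LINT y:{\<omega>-\<epsilon>..\<omega>+\<epsilon>}|lborel. K (y - \<omega>) * Q j y)"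
      unfolding Fneg_def Q_def by (simp add: ac_simps)
    also have "\<dots> = (-1)^j * (\<integral>t. K t * Q j (t + \<omega>) \<partial>lborel)" by (subst transK) simp
    finally show ?thesis .
  qed
  have Qi: "integrable lborel (\<lambda>t. K t * Q j (t + \<omega>))" for j
    apply (rule intK_cont)
    unfolding Q_def apply measurable
    apply (intro continuous_intros)
    using om by (auto simp: power_eq_0_iff)
  define C where "C j = fact (j-1) * (-1)^j / (\<rho> - complex_of_real a)^j" for j
  have pa: "\<rho> - complex_of_real a \<noteq> 0" using c0 unfolding c_def by auto
  have KS: "(\<lambda>t. K t * S (t + \<omega>)) = (\<lambda>t. \<Sum>j=1..k. C j * (K t * Q j (t + \<omega>)))"
    unfolding S_def sum_distrib_left C_def by (intro ext sum.cong refl) (simp add: field_simps)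
  have sum_eq: "(\<Sum>j=1..k. of_nat (fact (j - 1)) * Fneg K \<epsilon> \<omega> \<rho> j / (\<rho> - complex_of_real a) ^ j)
      = (\<integral>t. K t * S (t + \<omega>) \<partial>lborel)"
  proof -
    have "(\<integral>t. K t * S (t + \<omega>) \<partial>lborel) = (\<integral>t. (\<Sum>j=1..k. C j * (K t * Q j (t + \<omega>))) \<partial>lborel)"
      unfolding S_def sum_distrib_left C_def by (intro Bochner_Integration.integral_cong sum.cong refl) (simp add: field_simps)
    also have "\<dots> = (\<Sum>j=1..k. C j * (\<integral>t. K t * Q j (t + \<omega>) \<partial>lborel))"
      by (subst Bochner_Integration.integral_sum) (auto simp: Qi)
    also have "\<dots> = (\<Sum>j=1..k. of_nat (fact (j - 1)) * Fneg K \<epsilon> \<omega> \<rho> j / (\<rho> - complex_of_real a) ^ j)"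
      unfolding Fneg_eq C_def by (rule sum.cong[OF refl]) simp
    finally show ?thesis by simp
  qed
  have Si: "integrable lborel (\<lambda>t. K t * S (t + \<omega>))"
    unfolding KS by (intro Bochner_Integration.integrable_sum Bochner_Integration.integrable_mult_right Qi)
  have Dm: "(\<lambda>t. D (t + \<omega>)) \<in> borel_measurable lborel"
    unfolding D_def P_def S_def Q_def Eit_def set_lebesgue_integral_def by measurable
  have Db: "norm (D (t + \<omega>)) \<le> B" if t: "t \<in> {-\<epsilon>..\<epsilon>}" for t
  proof -
    define y where "y = t + \<omega>"
    have y0: "y > 0" and ylo: "\<omega> - \<epsilon> \<le> y" and yhi: "y \<le> \<omega> + \<epsilon>" using t om unfolding y_def by auto
    have Imcy: "Im (c * complex_of_real y) \<noteq> 0" using Imc \<gamma> y0 by simp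
    have Sy: "S y = complex_of_real y * exp (complex_of_real ((1/2 - a) * y)) *
        (\<Sum>j=1..k. fact (j-1) * exp (c * complex_of_real y) / (c * complex_of_real y)^j)"
      unfolding S_def sum_distrib_left
      apply (intro sum.cong refl)
      subgoal for j using alg1[OF y0, of j a \<rho>] c0 by (simp add: c_def Q_def)
      done
    have "norm (D y) = y * exp ((1/2 - a) * y) * norm (Eit (c * complex_of_real y)
           - (\<Sum>j=1..k. fact (j-1) * exp (c * complex_of_real y) / (c * complex_of_real y)^j))"
      unfolding D_def P_def Sy right_diff_distrib[symmetric] norm_mult using y0 by simp
    also have "\<dots> \<le> y * exp ((1/2 - a) * y) * (fact k * exp (Re (c * complex_of_real y)) / \<bar>Im (c * complex_of_real y)\<bar>^(k+1))"
      by (intro mult_left_mono Eit_bound[OF Imcy]) (use y0 in auto)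
    also have "\<dots> = fact k * exp ((1/2 - \<beta>) * y) / (\<bar>\<gamma>\<bar>^(k+1) * y^k)"
    proof -
      have "exp ((1/2 - a) * y) * exp ((a - \<beta>) * y) = exp ((1/2 - \<beta>) * y)"
        unfolding exp_add[symmetric] by (simp add: algebra_simps)
      moreover have "Re (c * complex_of_real y) = (a - \<beta>) * y" using Rec by simp
      moreover have "\<bar>Im (c * complex_of_real y)\<bar> = \<bar>\<gamma>\<bar> * y" using Imc y0 by (simp add: abs_mult)
      ultimately show ?thesis using y0 \<gamma>
        by (simp only:) (simp add: power_mult_distrib field_simps)
    qed
    also have "\<dots> \<le> B"
    proof -
      have e1: "exp ((1/2 - \<beta>) * y) \<le> exp (\<epsilon> / 2) * exp ((1/2 - \<beta>) * \<omega>)"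
      proof -
        have "(1/2 - \<beta>) * (y - \<omega>) \<le> \<epsilon> / 2"
        proof -
          have "\<bar>1/2 - \<beta>\<bar> \<le> 1/2" "\<bar>y - \<omega>\<bar> \<le> \<epsilon>" unfolding abs_le_iff using \<beta> ylo yhi by auto
          then have "\<bar>1/2 - \<beta>\<bar> * \<bar>y - \<omega>\<bar> \<le> 1/2 * \<epsilon>" by (intro mult_mono) auto
          moreover have "(1/2 - \<beta>) * (y - \<omega>) \<le> \<bar>1/2 - \<beta>\<bar> * \<bar>y - \<omega>\<bar>" unfolding abs_mult[symmetric] by (rule abs_ge_self)
          ultimately show ?thesis by linarith
        qed
        then have "(1/2 - \<beta>) * y \<le> \<epsilon> / 2 + (1/2 - \<beta>) * \<omega>" unfolding right_diff_distrib[of "1/2 - \<beta>"] by linarith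
        then have "exp ((1/2 - \<beta>) * y) \<le> exp (\<epsilon> / 2 + (1/2 - \<beta>) * \<omega>)" by simp
        then show ?thesis by (simp add: exp_add)
      qed
      have e2: "(\<omega> - \<epsilon>)^k * \<bar>\<gamma>\<bar>^(k+1) \<le> \<bar>\<gamma>\<bar>^(k+1) * y^k"
        using ylo om by (subst mult.commute, intro mult_right_mono power_mono) auto
      have pos: "0 < (\<omega> - \<epsilon>)^k * \<bar>\<gamma>\<bar>^(k+1)" using om \<gamma> by simp
      show ?thesis unfolding B_def
        apply (rule frac_le)
        using e1 pos e2 by (auto intro!: mult_left_mono)
    qed
    finally show ?thesis unfolding y_def .
  qed
  have Di: "integrable lborel (\<lambda>t. K t * D (t + \<omega>))" and Dn: "norm (\<integral>t. K t * D (t + \<omega>) \<partial>lborel) \<le> B"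
    using intK[OF Dm Db] by auto
  have "Phi K \<epsilon> \<omega> \<rho> a = (\<integral>t. K t * S (t + \<omega>) + K t * D (t + \<omega>) \<partial>lborel)"
    unfolding Phi_eq D_def by (simp add: algebra_simps)
  also have "\<dots> = (\<integral>t. K t * S (t + \<omega>) \<partial>lborel) + (\<integral>t. K t * D (t + \<omega>) \<partial>lborel)"
    by (rule Bochner_Integration.integral_add[OF Si Di])
  finally show ?thesis using Dn sum_eq unfolding B_def \<rho>_def[symmetric] by simp
qed

end



context Kctx begin

lemma R_bound:
  fixes \<omega> t :: real and j m :: nat
  assumes om: "exp 1 * \<epsilon> < \<omega>" and j: "j \<ge> 2" and t: "\<bar>t\<bar> \<le> \<epsilon>"
  shows "\<bar>1 / (t + \<omega>)^(j-1) - (\<Sum>n=0..m. real ((n + j - 2) choose n) * (-t)^n / \<omega>^(n+j-1))\<bar>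
     \<le> exp 1 ^ (j-2) / \<omega>^(j-1) * ((exp 1 * \<epsilon> / \<omega>)^(m+1) / (1 - exp 1 * \<epsilon> / \<omega>))"
proof -
  have e1: "1 \<le> exp (1::real)" by simp
  have "\<epsilon> \<le> exp 1 * \<epsilon>" using mult_right_mono[OF e1] eps0 by simp
  then have om0: "\<omega> > 0" using om eps0 by linarith
  define x where "x = t / \<omega>"
  have x: "\<bar>x\<bar> \<le> \<epsilon> / \<omega>" unfolding x_def using t om0 by (simp add: abs_div divide_right_mono)
  have r: "exp 1 * (\<epsilon> / \<omega>) < 1" using om om0 by (simp add: field_simps)
  have tw: "t + \<omega> = \<omega> * (1 + x)" unfolding x_def using om0 by (simp add: field_simps)
  have "1 / (t + \<omega>)^(j-1) - (\<Sum>n=0..m. real ((n + j - 2) choose n) * (-t)^n / \<omega>^(n+j-1))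
      = 1 / \<omega>^(j-1) * (1 / (1+x)^(j-1) - (\<Sum>n=0..m. real ((n + (j-1) - 1) choose n) * (-x)^n))"
  proof -
    have "(-t)^n / \<omega>^(n+j-1) = 1 / \<omega>^(j-1) * (-x)^n" for n
    proof -
      have "n + j - 1 = n + (j - 1)" using j by simp
      moreover have "(-t)^n = \<omega>^n * (-x)^n"
      proof -
        have "-t = \<omega> * (-x)" unfolding x_def using om0 by simp
        then show ?thesis by (metis power_mult_distrib)
      qed
      ultimately show ?thesis using om0 by (simp add: power_add field_simps)
    qed
    note tx = this
    have ix: "n + j - 2 = n + (j-1) - 1" for n using j by simp
    have st: "real ((n + j - 2) choose n) * (-t)^n / \<omega>^(n+j-1) = 1 / \<omega>^(j-1) * (real ((n + (j-1) - 1) choose n) * (-x)^n)" for n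
      unfolding ix times_divide_eq_right[symmetric] tx by simp
    have pw: "1 / (\<omega> * (1 + x))^(j-1) = 1 / \<omega>^(j-1) * (1 / (1+x)^(j-1))"
      by (simp add: power_mult_distrib)
    show ?thesis
      unfolding st tw pw sum_distrib_left[symmetric] right_diff_distrib ..
  qed
  also have "\<bar>\<dots>\<bar> \<le> 1 / \<omega>^(j-1) * (exp 1 ^ (j-1-1) * ((exp 1 * (\<epsilon> / \<omega>))^(m+1) / (1 - exp 1 * (\<epsilon> / \<omega>))))"
  proof -
    have "\<bar>1 / \<omega>^(j-1)\<bar> = 1 / \<omega>^(j-1)" using om0 by simp
    note h = this
    show ?thesis unfolding abs_mult h
      by (intro mult_left_mono binom_rem[OF _ x r]) (use j om0 in auto)
  qed
  also have "\<dots> = exp 1 ^ (j-2) / \<omega>^(j-1) * ((exp 1 * \<epsilon> / \<omega>)^(m+1) / (1 - exp 1 * \<epsilon> / \<omega>))"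
  proof -
    have "j - 1 - 1 = j - 2" by simp
    then show ?thesis by (simp only: times_divide_eq_right times_divide_eq_left mult_1_left mult_1_right)
  qed
  finally show ?thesis .
qed

end




context Kctx begin

lemma Fneg_trans:
  "Fneg K \<epsilon> \<omega> \<rho> j = (-1)^j * (\<integral>t. K t * (complex_of_real (1 / (t + \<omega>)^(j-1)) * exp ((1/2 - \<rho>) * complex_of_real (t + \<omega>))) \<partial>lborel)"
proof -
  have "Fneg K \<epsilon> \<omega> \<rho> j = (-1)^j * (LINT y:{\<omega>-\<epsilon>..\<omega>+\<epsilon>}|lborel. K (y - \<omega>) * (complex_of_real (1 / y^(j-1)) * exp ((1/2 - \<rho>) * complex_of_real y)))"
    unfolding Fneg_def by (simp add: ac_simps)
  also have "\<dots> = (-1)^j * (\<integral>t. K t * (complex_of_real (1 / (t + \<omega>)^(j-1)) * exp ((1/2 - \<rho>) * complex_of_real (t + \<omega>))) \<partial>lborel)"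
    by (subst transK) (rule refl)
  finally show ?thesis .
qed

lemma w0_eq: "- \<i> * complex_of_real t * (\<rho> / \<i> - 1 / (2 * \<i>)) = (1/2 - \<rho>) * complex_of_real t"
  by (simp add: field_simps)

lemma exp_shift: "exp ((1/2 - \<rho>) * complex_of_real (t + \<omega>)) = exp ((1/2 - \<rho>) * complex_of_real \<omega>) * exp ((1/2 - \<rho>) * complex_of_real t)"
  by (simp add: exp_add[symmetric] algebra_simps add_divide_distrib)

lemma Fneg1:
  "Fneg K \<epsilon> \<omega> \<rho> 1 = - exp ((1/2 - \<rho>) * complex_of_real \<omega>) * Khat K (\<rho> / \<i> - 1 / (2 * \<i>))"
proof -
  have "Fneg K \<epsilon> \<omega> \<rho> 1 = - (\<integral>t. exp ((1/2 - \<rho>) * complex_of_real \<omega>) * (K t * exp ((1/2 - \<rho>) * complex_of_real t)) \<partial>lborel)"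
    unfolding Fneg_trans exp_shift by (simp add: ac_simps)
  also have "\<dots> = - exp ((1/2 - \<rho>) * complex_of_real \<omega>) * (\<integral>t. K t * exp ((1/2 - \<rho>) * complex_of_real t) \<partial>lborel)"
    by simp
  also have "(\<integral>t. K t * exp ((1/2 - \<rho>) * complex_of_real t) \<partial>lborel) = Khat K (\<rho> / \<i> - 1 / (2 * \<i>))"
    unfolding Khat_def w0_eq ..
  finally show ?thesis .
qed

lemma Fneg_exp:
  fixes \<omega> \<beta> \<gamma> :: real and j m :: nat
  assumes om: "exp 1 * \<epsilon> < \<omega>" and j: "j \<ge> 2" and \<beta>: "0 \<le> \<beta>" "\<beta> \<le> 1"
  shows "cmod (Fneg K \<epsilon> \<omega> (Complex \<beta> \<gamma>) j
                 - (-1) ^ j * exp ((1/2 - Complex \<beta> \<gamma>) * complex_of_real \<omega>)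
                   * (\<Sum>n=0..m. of_nat ((n + j - 2) choose n) * (- \<i>) ^ n
                        * (deriv ^^ n) (Khat K) (Complex \<beta> \<gamma> / \<i> - 1 / (2 * \<i>))
                        / complex_of_real (\<omega> ^ (n + j - 1))))
              \<le> exp (real j - 2 + \<epsilon> / 2) * exp ((1/2 - \<beta>) * \<omega>) / \<omega> ^ (j - 1)
                  * ((exp 1 * \<epsilon> / \<omega>) ^ (m + 1) / (1 - exp 1 * \<epsilon> / \<omega>))"
proof -
  define \<rho> where "\<rho> = Complex \<beta> \<gamma>"
  define w0 where "w0 = \<rho> / \<i> - 1 / (2 * \<i>)"
  define E where "E = exp ((1/2 - \<rho>) * complex_of_real \<omega>)"
  define e where "e t = exp ((1/2 - \<rho>) * complex_of_real t)" for t
  define A where "A t = 1 / (t + \<omega>)^(j-1)" for t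
  define c where "c n t = real ((n + j - 2) choose n) * (-t)^n / \<omega>^(n+j-1)" for n t
  define RB where "RB = exp 1 ^ (j-2) / \<omega>^(j-1) * ((exp 1 * \<epsilon> / \<omega>)^(m+1) / (1 - exp 1 * \<epsilon> / \<omega>))"
  have e1: "1 \<le> exp (1::real)" by simp
  have "\<epsilon> \<le> exp 1 * \<epsilon>" using mult_right_mono[OF e1] eps0 by simp
  then have om0: "\<omega> > \<epsilon>" using om by linarith
  have ci: "integrable lborel (\<lambda>t. K t * (complex_of_real (c n t) * e t))" for n
    unfolding c_def e_def by (rule intK_cont) (measurable, intro continuous_intros, use om0 eps0 in auto)
  have Ai: "integrable lborel (\<lambda>t. K t * (complex_of_real (A t) * e t))"
    unfolding A_def e_def
    by (rule intK_cont) (measurable, intro continuous_intros, use om0 eps0 in \<open>auto simp: power_eq_0_iff\<close>)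
  have trm: "of_nat ((n + j - 2) choose n) * (- \<i>) ^ n * (deriv ^^ n) (Khat K) w0 / complex_of_real (\<omega> ^ (n + j - 1))
      = (\<integral>t. K t * (complex_of_real (c n t) * e t) \<partial>lborel)" for n
  proof -
    have "of_nat ((n + j - 2) choose n) * (- \<i>) ^ n * (deriv ^^ n) (Khat K) w0 / complex_of_real (\<omega> ^ (n + j - 1))
      = (of_nat ((n + j - 2) choose n) * (- \<i>) ^ n / complex_of_real (\<omega> ^ (n + j - 1))) *
        (\<integral>t. K t * ((- \<i> * complex_of_real t)^n * exp (- \<i> * complex_of_real t * w0)) \<partial>lborel)"
      unfolding deriv_Khat Gf_def by simp
    also have "\<dots> = (\<integral>t. (of_nat ((n + j - 2) choose n) * (- \<i>) ^ n / complex_of_real (\<omega> ^ (n + j - 1))) *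
        (K t * ((- \<i> * complex_of_real t)^n * exp (- \<i> * complex_of_real t * w0))) \<partial>lborel)"
      by simp
    also have "\<dots> = (\<integral>t. K t * (complex_of_real (c n t) * e t) \<partial>lborel)"
    proof (intro Bochner_Integration.integral_cong refl)
      fix t :: real
      have "(- \<i>) ^ n * (- \<i> * complex_of_real t)^n = complex_of_real ((-t)^n)"
        by (simp add: power_mult_distrib[symmetric])
      then show "(of_nat ((n + j - 2) choose n) * (- \<i>) ^ n / complex_of_real (\<omega> ^ (n + j - 1))) *
        (K t * ((- \<i> * complex_of_real t)^n * exp (- \<i> * complex_of_real t * w0))) = K t * (complex_of_real (c n t) * e t)"
        unfolding c_def e_def w0_def w0_eq
        by (simp add: field_simps)
    qed
    finally show ?thesis .
  qed
  have sum_eq: "(\<Sum>n=0..m. of_nat ((n + j - 2) choose n) * (- \<i>) ^ n * (deriv ^^ n) (Khat K) w0 / complex_of_real (\<omega> ^ (n + j - 1)))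
      = (\<integral>t. K t * (complex_of_real (\<Sum>n=0..m. c n t) * e t) \<partial>lborel)"
    unfolding trm
    by (subst Bochner_Integration.integral_sum[symmetric]) (auto intro: ci simp: sum_distrib_left sum_distrib_right)
  have F_eq: "Fneg K \<epsilon> \<omega> \<rho> j = (-1)^j * E * (\<integral>t. K t * (complex_of_real (A t) * e t) \<partial>lborel)"
  proof -
    have "Fneg K \<epsilon> \<omega> \<rho> j = (-1)^j * (\<integral>t. E * (K t * (complex_of_real (A t) * e t)) \<partial>lborel)"
      unfolding Fneg_trans
      apply (rule arg_cong[where f="\<lambda>x. (-1)^j * x"])
      apply (intro Bochner_Integration.integral_cong refl)
      unfolding exp_shift A_def e_def E_def by (simp only: mult_ac)
    then show ?thesis by simp
  qed
  have diff: "Fneg K \<epsilon> \<omega> \<rho> j - (-1)^j * E * (\<Sum>n=0..m. of_nat ((n + j - 2) choose n) * (- \<i>) ^ n * (deriv ^^ n) (Khat K) w0 / complex_of_real (\<omega> ^ (n + j - 1)))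
      = (-1)^j * E * (\<integral>t. K t * (complex_of_real (A t - (\<Sum>n=0..m. c n t)) * e t) \<partial>lborel)"
  proof -
    have si: "integrable lborel (\<lambda>t. K t * (complex_of_real (\<Sum>n=0..m. c n t) * e t))"
      unfolding c_def e_def by (rule intK_cont) (measurable, intro continuous_intros, use om0 eps0 in auto)
    have "(\<integral>t. K t * (complex_of_real (A t - (\<Sum>n=0..m. c n t)) * e t) \<partial>lborel)
       = (\<integral>t. K t * (complex_of_real (A t) * e t) - K t * (complex_of_real (\<Sum>n=0..m. c n t) * e t) \<partial>lborel)"
      by (simp add: algebra_simps)
    also have "\<dots> = (\<integral>t. K t * (complex_of_real (A t) * e t) \<partial>lborel) - (\<integral>t. K t * (complex_of_real (\<Sum>n=0..m. c n t) * e t) \<partial>lborel)"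
      by (rule Bochner_Integration.integral_diff[OF Ai si])
    finally have X: "(\<integral>t. K t * (complex_of_real (A t - (\<Sum>n=0..m. c n t)) * e t) \<partial>lborel)
       = (\<integral>t. K t * (complex_of_real (A t) * e t) \<partial>lborel) - (\<integral>t. K t * (complex_of_real (\<Sum>n=0..m. c n t) * e t) \<partial>lborel)" .
    show ?thesis unfolding F_eq sum_eq X by (simp only: right_diff_distrib)
  qed
  have bnd: "norm (\<integral>t. K t * (complex_of_real (A t - (\<Sum>n=0..m. c n t)) * e t) \<partial>lborel) \<le> RB * exp (\<epsilon> / 2)"
  proof (rule intK(2))
    show "(\<lambda>t. complex_of_real (A t - (\<Sum>n=0..m. c n t)) * e t) \<in> borel_measurable lborel"
      unfolding A_def c_def e_def by measurable
    fix t :: real assume t: "t \<in> {-\<epsilon>..\<epsilon>}"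
    then have at: "\<bar>t\<bar> \<le> \<epsilon>" by auto
    have r: "\<bar>A t - (\<Sum>n=0..m. c n t)\<bar> \<le> RB"
      unfolding A_def c_def RB_def by (rule R_bound[OF om j at])
    have ee: "norm (e t) \<le> exp (\<epsilon> / 2)"
    proof -
      have "\<bar>1/2 - \<beta>\<bar> \<le> 1/2" unfolding abs_le_iff using \<beta> by auto
      then have "\<bar>1/2 - \<beta>\<bar> * \<bar>t\<bar> \<le> 1/2 * \<epsilon>" using at by (intro mult_mono) auto
      moreover have "(1/2 - \<beta>) * t \<le> \<bar>1/2 - \<beta>\<bar> * \<bar>t\<bar>" unfolding abs_mult[symmetric] by (rule abs_ge_self)
      ultimately have "(1/2 - \<beta>) * t \<le> \<epsilon> / 2" by linarith
      then show ?thesis unfolding e_def \<rho>_def by simp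
    qed
    show "norm (complex_of_real (A t - (\<Sum>n=0..m. c n t)) * e t) \<le> RB * exp (\<epsilon> / 2)"
      unfolding norm_mult norm_of_real using r ee by (intro mult_mono) auto
  qed
  have nE: "norm E = exp ((1/2 - \<beta>) * \<omega>)" unfolding E_def \<rho>_def by simp
  have "cmod (Fneg K \<epsilon> \<omega> \<rho> j - (-1)^j * E * (\<Sum>n=0..m. of_nat ((n + j - 2) choose n) * (- \<i>) ^ n * (deriv ^^ n) (Khat K) w0 / complex_of_real (\<omega> ^ (n + j - 1))))
      \<le> exp ((1/2 - \<beta>) * \<omega>) * (RB * exp (\<epsilon> / 2))"
    unfolding diff norm_mult nE norm_power norm_minus_cancel norm_one power_one mult_1_left by (rule mult_left_mono[OF bnd]) simp
  also have "\<dots> = exp (real j - 2 + \<epsilon> / 2) * exp ((1/2 - \<beta>) * \<omega>) / \<omega> ^ (j - 1)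
                  * ((exp 1 * \<epsilon> / \<omega>) ^ (m + 1) / (1 - exp 1 * \<epsilon> / \<omega>))"
  proof -
    have rj: "real j - 2 = real (j - 2)" using j by simp
    have "exp (real (j - 2)) = exp 1 ^ (j-2)" using exp_of_nat_mult[of "j-2" 1] by simp
    then have X: "exp (real j - 2 + \<epsilon> / 2) = exp 1 ^ (j-2) * exp (\<epsilon> / 2)"
      unfolding rj exp_add by simp
    show ?thesis unfolding RB_def X by (simp only: mult_ac times_divide_eq_right times_divide_eq_left divide_divide_eq_left)
  qed
  finally show ?thesis unfolding \<rho>_def E_def w0_def .
qed

end


theorem lemma3:
  fixes K :: "real \<Rightarrow> complex" and \<epsilon> \<omega> a \<beta> \<gamma> :: real
  assumes eps: "0 < \<epsilon>" "\<epsilon> < \<omega>"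
    and K_int: "set_integrable lborel {-\<epsilon>..\<epsilon>} K"
    and K_norm: "(LINT t:{-\<epsilon>..\<epsilon>}|lborel. norm (K t)) = 1"
    and K_supp: "\<And>t. t \<notin> {-\<epsilon>..\<epsilon>} \<Longrightarrow> K t = 0"
    and a: "0 \<le> a" "a \<le> 1"
    and \<beta>: "0 \<le> \<beta>" "\<beta> \<le> 1"
    and \<gamma>: "\<gamma> \<noteq> 0"
  shows "(\<forall>k::nat. k \<ge> 1 \<longrightarrow>
           cmod (Phi K \<epsilon> \<omega> (Complex \<beta> \<gamma>) a
                 - (\<Sum>j=1..k. of_nat (fact (j - 1)) * Fneg K \<epsilon> \<omega> (Complex \<beta> \<gamma>) j
                               / (Complex \<beta> \<gamma> - complex_of_real a) ^ j))
           \<le> fact k * exp (\<epsilon> / 2) * exp ((1/2 - \<beta>) * \<omega>)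
               / ((\<omega> - \<epsilon>) ^ k * \<bar>\<gamma>\<bar> ^ (k + 1)))
       \<and> Fneg K \<epsilon> \<omega> (Complex \<beta> \<gamma>) 1
           = - exp ((1/2 - Complex \<beta> \<gamma>) * complex_of_real \<omega>)
               * Khat K (Complex \<beta> \<gamma> / \<i> - 1 / (2 * \<i>))
       \<and> (exp 1 * \<epsilon> < \<omega> \<longrightarrow>
           (\<forall>j::nat. \<forall>m::nat. j \<ge> 2 \<longrightarrow>
              cmod (Fneg K \<epsilon> \<omega> (Complex \<beta> \<gamma>) j
                 - (-1) ^ j * exp ((1/2 - Complex \<beta> \<gamma>) * complex_of_real \<omega>)
                   * (\<Sum>n=0..m. of_nat ((n + j - 2) choose n) * (- \<i>) ^ n
                        * (deriv ^^ n) (Khat K) (Complex \<beta> \<gamma> / \<i> - 1 / (2 * \<i>))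
                        / complex_of_real (\<omega> ^ (n + j - 1))))
              \<le> exp (real j - 2 + \<epsilon> / 2) * exp ((1/2 - \<beta>) * \<omega>) / \<omega> ^ (j - 1)
                  * ((exp 1 * \<epsilon> / \<omega>) ^ (m + 1) / (1 - exp 1 * \<epsilon> / \<omega>))))"
proof -
  interpret Kctx K \<epsilon> using eps K_int K_norm K_supp by unfold_locales auto
  show ?thesis
    using Phi_part[OF eps(2) \<beta> \<gamma>] Fneg1[of \<omega> "Complex \<beta> \<gamma>"] Fneg_exp[OF _ _ \<beta>] by blast
qed

end
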